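(* Let $\alpha\in(\pi/8,3\pi/8)$ with $\alpha/\pi\notin\mathbb{Q}$, $\beta=\alpha-\pi/2$, $\rho=0.01$, $A_1=\rho R(\alpha)$, $A_2=\rho R(\beta)$ where $R(\theta)=\begin{bmatrix}\cos\theta&-\sin\theta\\ \sin\theta&\cos\theta\end{bmatrix}$, and $c(x)=x_1^2+2x_2^2$ for $x=[x_1,x_2]^\top\in\mathbb{R}^2$. Then the worst-case value function $J^\circ$ of $\{A_1,A_2\}$ with cost $c$ is non-differentiable on a dense subset of $\mathbb{R}^2$.
   Context: For the switched linear system $\xi(t+1)=A_{\sigma(t)}\xi(t)$ with switching signal $\sigma:\mathbb{N}\to\{1,2\}$, $\xi(t,x,\sigma)$ denotes the solution with $\xi(0)=x$, and $J^\circ(x)=\sup_\sigma\sum_{t=0}^\infty c(\xi(t,x,\sigma))$. *)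

theory Defs
  imports "HOL-Analysis.Analysis"
begin

definition rot :: "real \<Rightarrow> real^2^2" where
  "rot \<theta> = (\<chi> i j. if i = 1 \<and> j = 1 then cos \<theta>
                     else if i = 1 \<and> j = 2 then - sin \<theta>
                     else if i = 2 \<and> j = 1 then sin \<theta>
                     else cos \<theta>)"

fun traj :: "(nat \<Rightarrow> real^2^2) \<Rightarrow> nat \<Rightarrow> real^2 \<Rightarrow> (nat \<Rightarrow> nat) \<Rightarrow> real^2" where
  "traj A 0 x \<sigma> = x"
| "traj A (Suc t) x \<sigma> = A (\<sigma> t) *v traj A t x \<sigma>"

definition signals :: "(nat \<Rightarrow> nat) set" where
  "signals = {\<sigma>. \<forall>t. \<sigma> t \<in> {1, 2}}"

definition worst_value :: "(nat \<Rightarrow> real^2^2) \<Rightarrow> (real^2 \<Rightarrow> real) \<Rightarrow> real^2 \<Rightarrow> real" where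
  "worst_value A c x = (SUP \<sigma>\<in>signals. (\<Sum>t. c (traj A t x \<sigma>)))"

end

theory Submission
  imports Defs
begin

definition mk :: "real \<Rightarrow> real \<Rightarrow> real^2" where "mk a b = (\<chi> i. if i = 1 then a else b)"
lemma mk_nth[simp]: "mk a b $ 1 = a" "mk a b $ 2 = b"
  by (simp_all add: mk_def)
lemma vec2_eq: "(x::real^2) = y \<longleftrightarrow> x$1 = y$1 \<and> x$2 = y$2"
  by (simp add: vec_eq_iff forall_2)
lemma rot_mv: "rot \<theta> *v y = mk (cos \<theta> * y$1 - sin \<theta> * y$2) (sin \<theta> * y$1 + cos \<theta> * y$2)"
  by (simp add: vec2_eq rot_def matrix_vector_mult_def sum_2)
lemma norm2: "norm (y::real^2) = sqrt ((y$1)^2 + (y$2)^2)"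
  by (simp add: norm_vec_def L2_set_def sum_2)
lemma norm2_sq: "(norm (y::real^2))^2 = (y$1)^2 + (y$2)^2"
  by (simp add: norm2)

lemma rot_comp: "rot a *v (rot b *v z) = rot (a + b) *v z"
  by (simp add: rot_mv vec2_eq cos_add sin_add algebra_simps)
lemma rot_zero[simp]: "rot 0 *v z = z"
  by (simp add: rot_mv vec2_eq)
lemma rot_norm[simp]: "norm (rot a *v z) = norm z"
proof -
  have "(cos a * z $ 1 - sin a * z $ 2)\<^sup>2 + (sin a * z $ 1 + cos a * z $ 2)\<^sup>2
        = ((sin a)^2 + (cos a)^2) * ((z$1)^2 + (z$2)^2)"
    by algebra
  then show ?thesis by (simp only: norm2 rot_mv mk_nth sin_cos_squared_add mult_1)
qed
lemma rot_scale: "rot a *v (r *\<^sub>R z) = r *\<^sub>R (rot a *v z)"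
  by (simp add: rot_mv vec2_eq algebra_simps)
lemma rot_add: "rot a *v (y + z) = rot a *v y + rot a *v z"
  by (simp add: rot_mv vec2_eq algebra_simps)
lemma rot_diff: "rot a *v (y - z) = rot a *v y - rot a *v z"
  by (simp add: rot_mv vec2_eq algebra_simps)
lemma rot_neg: "rot a *v (- z) = - (rot a *v z)"
  by (simp add: rot_mv vec2_eq algebra_simps)

definition c0 :: "real^2 \<Rightarrow> real" where "c0 = (\<lambda>x. (x $ 1)^2 + 2 * (x $ 2)^2)"

lemma c0_scale: "c0 (r *\<^sub>R y) = r^2 * c0 y"
  by (simp add: c0_def power2_eq_square algebra_simps)
lemma c0_nonneg: "0 \<le> c0 y" by (simp add: c0_def)
lemma c0_upper: "c0 y \<le> 2 * (norm y)^2"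
  by (simp add: c0_def norm2_sq)
lemma c0_lower: "(norm y)^2 \<le> c0 y"
  by (simp add: c0_def norm2_sq)
lemma c0_par: "c0 (a + b) + c0 (a - b) = 2 * c0 a + 2 * c0 b"
  by (simp add: c0_def power2_eq_square algebra_simps)

lemma c0_lip: "c0 a - c0 b \<le> 2 * norm (a - b) * norm (a + b)"
proof -
  define u1 where "u1 = a$1 - b$1"
  define u2 where "u2 = a$2 - b$2"
  define v1 where "v1 = a$1 + b$1"
  define v2 where "v2 = a$2 + b$2"
  have e: "c0 a - c0 b = u1 * v1 + 2 * (u2 * v2)"
    by (simp add: c0_def u1_def u2_def v1_def v2_def power2_eq_square algebra_simps)
  have n1: "norm (a - b) = sqrt (u1^2 + u2^2)" by (simp add: norm2 u1_def u2_def)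
  have n2: "norm (a + b) = sqrt (v1^2 + v2^2)" by (simp add: norm2 v1_def v2_def)
  have cs: "(u1 * v1 + u2 * v2)^2 \<le> (u1^2 + u2^2) * (v1^2 + v2^2)"
  proof -
    have "0 \<le> (u1 * v2 - u2 * v1)^2" by simp
    then show ?thesis by (simp add: power2_eq_square algebra_simps)
  qed
  have "\<bar>u1 * v1 + u2 * v2\<bar> \<le> sqrt (u1^2 + u2^2) * sqrt (v1^2 + v2^2)"
    by (metis cs real_sqrt_abs real_sqrt_le_mono real_sqrt_mult)
  moreover have "\<bar>u1 * v1\<bar> + \<bar>u2 * v2\<bar> \<le> sqrt (u1^2 + u2^2) * sqrt (v1^2 + v2^2)"
  proof -
    have cs2: "(\<bar>u1\<bar> * \<bar>v1\<bar> + \<bar>u2\<bar> * \<bar>v2\<bar>)^2 \<le> (\<bar>u1\<bar>^2 + \<bar>u2\<bar>^2) * (\<bar>v1\<bar>^2 + \<bar>v2\<bar>^2)"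
    proof -
      have "0 \<le> (\<bar>u1\<bar> * \<bar>v2\<bar> - \<bar>u2\<bar> * \<bar>v1\<bar>)^2" by simp
      then show ?thesis by (simp add: power2_eq_square algebra_simps)
    qed
    then have "\<bar>\<bar>u1\<bar> * \<bar>v1\<bar> + \<bar>u2\<bar> * \<bar>v2\<bar>\<bar> \<le> sqrt (u1^2 + u2^2) * sqrt (v1^2 + v2^2)"
      by (metis power2_abs real_sqrt_abs real_sqrt_le_mono real_sqrt_mult)
    then show ?thesis by (simp add: abs_mult)
  qed
  ultimately have "u1 * v1 + 2 * (u2 * v2) \<le> 2 * (sqrt (u1^2 + u2^2) * sqrt (v1^2 + v2^2))"
    by (smt (verit) abs_ge_self abs_mult abs_ge_zero)
  then show ?thesis using e n1 n2 by simp
qed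


definition qq :: real where "qq = 1/10000"
definition KK :: real where "KK = 2 / (1 - qq)"
lemma qq_props: "0 < qq" "qq < 1" by (simp_all add: qq_def)
lemma KK_val: "KK = 20000/9999" by (simp add: KK_def qq_def)

definition Fs :: "(nat \<Rightarrow> real) \<Rightarrow> real^2 \<Rightarrow> real" where
  "Fs \<phi> x = (\<Sum>t. qq^t * c0 (rot (\<phi> t) *v x))"

lemma geo_sum: "(\<Sum>t. C * qq^t) = C * (1 / (1 - qq))"
  using suminf_mult[OF summable_geometric[of qq]] suminf_geometric[of qq] qq_props by simp
lemma geo_summable: "summable (\<lambda>t. C * qq^t)"
  using summable_mult[OF summable_geometric[of qq]] qq_props by simp

lemma Fs_term_bound: "0 \<le> qq^t * c0 (rot (\<phi> t) *v x)" "qq^t * c0 (rot (\<phi> t) *v x) \<le> (2 * (norm x)^2) * qq^t"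
proof -
  show "0 \<le> qq^t * c0 (rot (\<phi> t) *v x)" using qq_props c0_nonneg by simp
  have "c0 (rot (\<phi> t) *v x) \<le> 2 * (norm x)^2" using c0_upper[of "rot (\<phi> t) *v x"] by simp
  then show "qq^t * c0 (rot (\<phi> t) *v x) \<le> (2 * (norm x)^2) * qq^t"
    using qq_props by (simp add: mult.commute mult_left_mono)
qed

lemma Fs_summable: "summable (\<lambda>t. qq^t * c0 (rot (\<phi> t) *v x))"
  by (rule summable_comparison_test'[OF geo_summable[of "2 * (norm x)^2"]])
     (use Fs_term_bound in auto)

lemma Fs_nonneg: "0 \<le> Fs \<phi> x"
  unfolding Fs_def by (rule suminf_nonneg[OF Fs_summable]) (use Fs_term_bound in auto)

lemma Fs_le: "Fs \<phi> x \<le> KK * (norm x)^2"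
proof -
  have "Fs \<phi> x \<le> (\<Sum>t. (2 * (norm x)^2) * qq^t)"
    unfolding Fs_def by (rule suminf_le[OF _ Fs_summable geo_summable]) (use Fs_term_bound in auto)
  also have "\<dots> = KK * (norm x)^2" by (simp add: geo_sum KK_def)
  finally show ?thesis .
qed

lemma Fs_scale: "Fs \<phi> (r *\<^sub>R x) = r^2 * Fs \<phi> x"
proof -
  have "Fs \<phi> (r *\<^sub>R x) = (\<Sum>t. r^2 * (qq^t * c0 (rot (\<phi> t) *v x)))"
    unfolding Fs_def by (simp add: rot_scale c0_scale algebra_simps)
  also have "\<dots> = r^2 * Fs \<phi> x" unfolding Fs_def by (rule suminf_mult[OF Fs_summable])
  finally show ?thesis .
qed

lemma Fs_par: "Fs \<phi> (a + b) + Fs \<phi> (a - b) = 2 * Fs \<phi> a + 2 * Fs \<phi> b"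
proof -
  have "Fs \<phi> (a + b) + Fs \<phi> (a - b) = (\<Sum>t. qq^t * c0 (rot (\<phi> t) *v (a+b)) + qq^t * c0 (rot (\<phi> t) *v (a-b)))"
    unfolding Fs_def by (rule suminf_add[OF Fs_summable Fs_summable])
  also have "\<dots> = (\<Sum>t. 2 * (qq^t * c0 (rot (\<phi> t) *v a)) + 2 * (qq^t * c0 (rot (\<phi> t) *v b)))"
  proof -
    have "qq^t * c0 (rot (\<phi> t) *v (a+b)) + qq^t * c0 (rot (\<phi> t) *v (a-b))
        = 2 * (qq^t * c0 (rot (\<phi> t) *v a)) + 2 * (qq^t * c0 (rot (\<phi> t) *v b))" for t
    proof -
      have "qq^t * c0 (rot (\<phi> t) *v (a+b)) + qq^t * c0 (rot (\<phi> t) *v (a-b))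
          = qq^t * (c0 (rot (\<phi> t) *v a + rot (\<phi> t) *v b) + c0 (rot (\<phi> t) *v a - rot (\<phi> t) *v b))"
        by (simp add: rot_add rot_diff algebra_simps)
      also have "\<dots> = qq^t * (2 * c0 (rot (\<phi> t) *v a) + 2 * c0 (rot (\<phi> t) *v b))"
        by (simp only: c0_par)
      finally show ?thesis by (simp add: algebra_simps)
    qed
    then show ?thesis by simp
  qed
  also have "\<dots> = (\<Sum>t. 2 * (qq^t * c0 (rot (\<phi> t) *v a))) + (\<Sum>t. 2 * (qq^t * c0 (rot (\<phi> t) *v b)))"
    by (rule suminf_add[symmetric]) (auto intro: summable_mult Fs_summable)
  also have "\<dots> = 2 * Fs \<phi> a + 2 * Fs \<phi> b"
    unfolding Fs_def by (simp add: suminf_mult Fs_summable)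
  finally show ?thesis .
qed

lemma Fs_lip: "Fs \<phi> x - Fs \<phi> y \<le> KK * (norm (x - y) * norm (x + y))"
proof -
  have "Fs \<phi> x - Fs \<phi> y = (\<Sum>t. qq^t * c0 (rot (\<phi> t) *v x) - qq^t * c0 (rot (\<phi> t) *v y))"
    unfolding Fs_def by (rule suminf_diff[OF Fs_summable Fs_summable])
  also have "\<dots> \<le> (\<Sum>t. (2 * (norm (x - y) * norm (x + y))) * qq^t)"
  proof (rule suminf_le)
    fix t
    have "c0 (rot (\<phi> t) *v x) - c0 (rot (\<phi> t) *v y) \<le> 2 * (norm (x - y) * norm (x + y))"
      using c0_lip[of "rot (\<phi> t) *v x" "rot (\<phi> t) *v y"]
      by (simp add: rot_add[symmetric] rot_diff[symmetric])
    then show "qq^t * c0 (rot (\<phi> t) *v x) - qq^t * c0 (rot (\<phi> t) *v y) \<le> (2 * (norm (x - y) * norm (x + y))) * qq^t"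
      using qq_props by (simp add: right_diff_distrib[symmetric] mult.commute mult_left_mono)
  qed (use qq_props in \<open>auto intro: summable_diff Fs_summable geo_summable\<close>)
  also have "\<dots> = KK * (norm (x - y) * norm (x + y))" by (simp add: geo_sum KK_def)
  finally show ?thesis .
qed


definition AA :: "real \<Rightarrow> nat \<Rightarrow> real^2^2" where
  "AA \<alpha> = (\<lambda>i::nat. if i = 1 then (0.01::real) *\<^sub>R rot \<alpha> else (0.01::real) *\<^sub>R rot (\<alpha> - pi / 2))"
definition th :: "real \<Rightarrow> nat \<Rightarrow> real" where "th \<alpha> i = (if i = 1 then \<alpha> else \<alpha> - pi / 2)"

lemma AA_mv: "AA \<alpha> i *v y = (1/100::real) *\<^sub>R (rot (th \<alpha> i) *v y)"
  by (simp add: AA_def th_def vec2_eq rot_def matrix_vector_mult_def sum_2)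

definition ang :: "real \<Rightarrow> (nat \<Rightarrow> nat) \<Rightarrow> nat \<Rightarrow> real" where
  "ang \<alpha> \<sigma> t = (\<Sum>s<t. th \<alpha> (\<sigma> s))"

lemma traj_closed: "traj (AA \<alpha>) t x \<sigma> = ((1/100::real)^t) *\<^sub>R (rot (ang \<alpha> \<sigma> t) *v x)"
proof (induction t)
  case 0
  then show ?case by (simp add: ang_def)
next
  case (Suc t)
  have "traj (AA \<alpha>) (Suc t) x \<sigma> = (1/100::real) *\<^sub>R (rot (th \<alpha> (\<sigma> t)) *v ((1/100::real)^t *\<^sub>R (rot (ang \<alpha> \<sigma> t) *v x)))"
    by (simp add: Suc AA_mv)
  also have "\<dots> = ((1/100::real)^Suc t) *\<^sub>R (rot (ang \<alpha> \<sigma> (Suc t)) *v x)"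
    by (simp add: rot_scale rot_comp ang_def add.commute)
  finally show ?case .
qed

definition FF :: "real \<Rightarrow> (nat \<Rightarrow> nat) \<Rightarrow> real^2 \<Rightarrow> real" where
  "FF \<alpha> \<sigma> x = (\<Sum>t. c0 (traj (AA \<alpha>) t x \<sigma>))"

lemma pow100: "((1/100::real)^t)^2 = qq^t"
  by (simp add: qq_def power_mult_distrib[symmetric] power2_eq_square power_divide flip: power_mult)

lemma FF_terms: "c0 (traj (AA \<alpha>) t x \<sigma>) = qq^t * c0 (rot (ang \<alpha> \<sigma> t) *v x)"
  by (simp add: traj_closed c0_scale pow100)

lemma FF_Fs: "FF \<alpha> \<sigma> x = Fs (ang \<alpha> \<sigma>) x"
  by (simp add: FF_def Fs_def FF_terms)

lemma FF_summable: "summable (\<lambda>t. c0 (traj (AA \<alpha>) t x \<sigma>))"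
  by (simp add: FF_terms Fs_summable)

lemma traj_shift: "traj A (Suc t) x \<sigma> = traj A t (A (\<sigma> 0) *v x) (\<lambda>n. \<sigma> (Suc n))"
  by (induction t) auto

lemma FF_shift: "FF \<alpha> \<sigma> x = c0 x + FF \<alpha> (\<lambda>n. \<sigma> (Suc n)) (AA \<alpha> (\<sigma> 0) *v x)"
proof -
  have "FF \<alpha> (\<lambda>n. \<sigma> (Suc n)) (AA \<alpha> (\<sigma> 0) *v x) = (\<Sum>t. c0 (traj (AA \<alpha>) (Suc t) x \<sigma>))"
    unfolding FF_def by (simp only: traj_shift)
  also have "\<dots> = FF \<alpha> \<sigma> x - c0 x"
    unfolding FF_def by (subst suminf_split_head[OF FF_summable]) simp
  finally show ?thesis by simp
qed

definition JJ :: "real \<Rightarrow> real^2 \<Rightarrow> real" where "JJ \<alpha> x = worst_value (AA \<alpha>) c0 x"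

lemma JJ_def2: "JJ \<alpha> x = (SUP \<sigma>\<in>signals. FF \<alpha> \<sigma> x)"
  by (simp add: JJ_def worst_value_def FF_def)

lemma signals_ne: "signals \<noteq> {}"
proof -
  have "(\<lambda>_. 1) \<in> signals" by (simp add: signals_def)
  then show ?thesis by blast
qed

lemma FF_bdd: "bdd_above ((\<lambda>\<sigma>. FF \<alpha> \<sigma> x) ` signals)"
  by (rule bdd_aboveI2[of _ _ "KK * (norm x)^2"]) (simp add: FF_Fs Fs_le)

lemma JJ_upper: "\<sigma> \<in> signals \<Longrightarrow> FF \<alpha> \<sigma> x \<le> JJ \<alpha> x"
  unfolding JJ_def2 by (rule cSUP_upper[OF _ FF_bdd])

lemma JJ_least: "(\<And>\<sigma>. \<sigma> \<in> signals \<Longrightarrow> FF \<alpha> \<sigma> x \<le> M) \<Longrightarrow> JJ \<alpha> x \<le> M"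
  unfolding JJ_def2 by (rule cSUP_least[OF signals_ne])

lemma sig1: "(\<lambda>_. 1) \<in> signals" by (simp add: signals_def)

lemma JJ_nonneg: "0 \<le> JJ \<alpha> x"
  using JJ_upper[OF sig1, of \<alpha> x] Fs_nonneg by (simp add: FF_Fs) (meson order_trans)

lemma JJ_le: "JJ \<alpha> x \<le> KK * (norm x)^2"
  by (rule JJ_least) (simp add: FF_Fs Fs_le)

lemma JJ_scale: "JJ \<alpha> (r *\<^sub>R x) = r^2 * JJ \<alpha> x"
proof -
  have le: "JJ \<alpha> (s *\<^sub>R y) \<le> s^2 * JJ \<alpha> y" for s y
  proof (rule JJ_least)
    fix \<sigma> assume "\<sigma> \<in> signals"
    then have "Fs (ang \<alpha> \<sigma>) y \<le> JJ \<alpha> y" using JJ_upper[of \<sigma> \<alpha> y] by (simp add: FF_Fs)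
    then show "FF \<alpha> \<sigma> (s *\<^sub>R y) \<le> s^2 * JJ \<alpha> y"
      by (simp add: FF_Fs Fs_scale mult_left_mono)
  qed
  show ?thesis
  proof (cases "r = 0")
    case True
    then show ?thesis using le[of 0 x] JJ_nonneg[of \<alpha> "r *\<^sub>R x"] by simp
  next
    case False
    have "JJ \<alpha> x = JJ \<alpha> ((1/r) *\<^sub>R (r *\<^sub>R x))" using False by simp
    also have "\<dots> \<le> (1/r)^2 * JJ \<alpha> (r *\<^sub>R x)" by (rule le)
    finally have "r^2 * JJ \<alpha> x \<le> r^2 * ((1/r)^2 * JJ \<alpha> (r *\<^sub>R x))"
      by (simp add: mult_left_mono)
    also have "\<dots> = JJ \<alpha> (r *\<^sub>R x)" using False by (simp add: power2_eq_square)
    finally have "r^2 * JJ \<alpha> x \<le> JJ \<alpha> (r *\<^sub>R x)" .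
    then show ?thesis using le[of r x] by simp
  qed
qed

lemma JJ_neg: "JJ \<alpha> (- x) = JJ \<alpha> x"
  using JJ_scale[of \<alpha> "-1" x] by simp

lemma JJ_mid: "2 * JJ \<alpha> u \<le> JJ \<alpha> (u + d) + JJ \<alpha> (u - d)"
proof -
  have "JJ \<alpha> u \<le> (JJ \<alpha> (u + d) + JJ \<alpha> (u - d)) / 2"
  proof (rule JJ_least)
    fix \<sigma> assume s: "\<sigma> \<in> signals"
    have "2 * FF \<alpha> \<sigma> u \<le> FF \<alpha> \<sigma> (u + d) + FF \<alpha> \<sigma> (u - d)"
      using Fs_par[of "ang \<alpha> \<sigma>" u d] Fs_nonneg[of "ang \<alpha> \<sigma>" d] by (simp add: FF_Fs)
    also have "\<dots> \<le> JJ \<alpha> (u + d) + JJ \<alpha> (u - d)" using JJ_upper[OF s] add_mono by blast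
    finally show "FF \<alpha> \<sigma> u \<le> (JJ \<alpha> (u + d) + JJ \<alpha> (u - d)) / 2" by simp
  qed
  then show ?thesis by simp
qed

lemma JJ_lip1: "JJ \<alpha> x - JJ \<alpha> y \<le> KK * (norm (x - y) * norm (x + y))"
proof -
  have "JJ \<alpha> x \<le> JJ \<alpha> y + KK * (norm (x - y) * norm (x + y))"
  proof (rule JJ_least)
    fix \<sigma> assume s: "\<sigma> \<in> signals"
    have "FF \<alpha> \<sigma> x \<le> FF \<alpha> \<sigma> y + KK * (norm (x - y) * norm (x + y))"
      using Fs_lip[of "ang \<alpha> \<sigma>" x y] by (simp add: FF_Fs)
    then show "FF \<alpha> \<sigma> x \<le> JJ \<alpha> y + KK * (norm (x - y) * norm (x + y))"
      using JJ_upper[OF s, of \<alpha> y] by linarith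
  qed
  then show ?thesis by simp
qed

lemma JJ_lip: "\<bar>JJ \<alpha> x - JJ \<alpha> y\<bar> \<le> KK * (norm (x - y) * norm (x + y))"
  using JJ_lip1[of \<alpha> x y] JJ_lip1[of \<alpha> y x] by (simp add: norm_minus_commute add.commute)


lemma JJ_isCont: "isCont (JJ \<alpha>) x"
proof -
  have g: "((\<lambda>y. KK * (norm (y - x) * norm (y + x))) \<longlongrightarrow> 0) (at x)"
  proof -
    have "((\<lambda>y. KK * (norm (y - x) * norm (y + x))) \<longlongrightarrow> KK * (norm (x - x) * norm (x + x))) (at x)"
      by (intro tendsto_intros)
    then show ?thesis by simp
  qed
  have "((\<lambda>y. JJ \<alpha> y - JJ \<alpha> x) \<longlongrightarrow> 0) (at x)"
    by (rule Lim_null_comparison[OF _ g]) (simp add: JJ_lip)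
  then show ?thesis unfolding isCont_def by (rule LIM_zero_cancel)
qed

lemma JJ_cont_on: "continuous_on S (JJ \<alpha>)"
  by (simp add: JJ_isCont continuous_at_imp_continuous_on)

lemma signals_shift: "\<sigma> \<in> signals \<Longrightarrow> (\<lambda>n. \<sigma> (Suc n)) \<in> signals"
  by (simp add: signals_def)

lemma bellman: "JJ \<alpha> x = c0 x + max (JJ \<alpha> (AA \<alpha> 1 *v x)) (JJ \<alpha> (AA \<alpha> 2 *v x))"
proof (rule antisym)
  show "JJ \<alpha> x \<le> c0 x + max (JJ \<alpha> (AA \<alpha> 1 *v x)) (JJ \<alpha> (AA \<alpha> 2 *v x))"
  proof (rule JJ_least)
    fix \<sigma> assume s: "\<sigma> \<in> signals"
    have "FF \<alpha> \<sigma> x = c0 x + FF \<alpha> (\<lambda>n. \<sigma> (Suc n)) (AA \<alpha> (\<sigma> 0) *v x)" by (rule FF_shift)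
    also have "\<dots> \<le> c0 x + JJ \<alpha> (AA \<alpha> (\<sigma> 0) *v x)"
      using JJ_upper[OF signals_shift[OF s]] by simp
    also have "\<dots> \<le> c0 x + max (JJ \<alpha> (AA \<alpha> 1 *v x)) (JJ \<alpha> (AA \<alpha> 2 *v x))"
    proof -
      have "\<sigma> 0 = 1 \<or> \<sigma> 0 = 2" using s by (simp add: signals_def)
      then show ?thesis by (elim disjE) simp_all
    qed
    finally show "FF \<alpha> \<sigma> x \<le> c0 x + max (JJ \<alpha> (AA \<alpha> 1 *v x)) (JJ \<alpha> (AA \<alpha> 2 *v x))" .
  qed
next
  have "JJ \<alpha> (AA \<alpha> i *v x) \<le> JJ \<alpha> x - c0 x" if i: "i \<in> {1, 2}" for i
  proof (rule JJ_least)
    fix \<tau> assume t: "\<tau> \<in> signals"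
    define \<sigma> where "\<sigma> = (\<lambda>n. case n of 0 \<Rightarrow> i | Suc m \<Rightarrow> \<tau> m)"
    have s: "\<sigma> \<in> signals" using t i unfolding signals_def \<sigma>_def by (auto split: nat.splits)
    have "FF \<alpha> \<sigma> x = c0 x + FF \<alpha> \<tau> (AA \<alpha> i *v x)"
      using FF_shift[of \<alpha> \<sigma> x] by (simp add: \<sigma>_def)
    then show "FF \<alpha> \<tau> (AA \<alpha> i *v x) \<le> JJ \<alpha> x - c0 x" using JJ_upper[OF s, of \<alpha> x] by simp
  qed
  from this[of 1] this[of 2]
  show "c0 x + max (JJ \<alpha> (AA \<alpha> 1 *v x)) (JJ \<alpha> (AA \<alpha> 2 *v x)) \<le> JJ \<alpha> x"
    by simp
qed

lemma nondiff_crit: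
  fixes f :: "real^2 \<Rightarrow> real"
  assumes k: "0 < \<kappa>" and b: "0 < b"
    and S: "\<And>h. 0 < h \<Longrightarrow> h < b \<Longrightarrow> \<kappa> * h \<le> f (x + h *\<^sub>R v) + f (x - h *\<^sub>R v) - 2 * f x"
  shows "\<not> f differentiable (at x)"
proof
  assume "f differentiable (at x)"
  then obtain f' where d: "(f has_derivative f') (at x)" unfolding differentiable_def by blast
  have l: "((\<lambda>s::real. x + s *\<^sub>R v) has_derivative (\<lambda>s. s *\<^sub>R v)) (at 0)"
    by (intro derivative_eq_intros) auto
  have d0: "(f has_derivative f') (at ((\<lambda>s::real. x + s *\<^sub>R v) 0))" using d by simp
  have "((f \<circ> (\<lambda>s::real. x + s *\<^sub>R v)) has_derivative (f' \<circ> (\<lambda>s. s *\<^sub>R v))) (at 0)"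
    by (rule diff_chain_at[OF l d0])
  moreover have "(f' \<circ> (\<lambda>s. s *\<^sub>R v)) = (*) (f' v)"
    using has_derivative_linear[OF d] by (auto simp: fun_eq_iff linear_scale)
  ultimately have D: "DERIV (\<lambda>s. f (x + s *\<^sub>R v)) 0 :> f' v"
    by (simp add: has_field_derivative_def comp_def)
  have D2: "DERIV (\<lambda>s. f (x + (- s) *\<^sub>R v)) 0 :> f' v * (-1)"
  proof -
    have D': "DERIV (\<lambda>s. f (x + s *\<^sub>R v)) ((\<lambda>s::real. - s) 0) :> f' v" using D by simp
    show ?thesis by (rule DERIV_chain2[where g="\<lambda>s::real. - s" and x=0, OF D']) (auto intro!: derivative_eq_intros)
  qed
  have "DERIV (\<lambda>s. f (x + s *\<^sub>R v) + f (x + (- s) *\<^sub>R v)) 0 :> f' v + f' v * (-1)"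
    by (rule DERIV_add[OF D D2])
  then have "((\<lambda>h. (f (x + h *\<^sub>R v) + f (x - h *\<^sub>R v) - 2 * f x) / h) \<longlongrightarrow> 0) (at 0)"
    unfolding DERIV_def by simp
  then have L: "((\<lambda>h. (f (x + h *\<^sub>R v) + f (x - h *\<^sub>R v) - 2 * f x) / h) \<longlongrightarrow> 0) (at_right 0)"
    by (rule tendsto_mono[OF at_le, rotated]) simp
  have "eventually (\<lambda>h. \<kappa> \<le> (f (x + h *\<^sub>R v) + f (x - h *\<^sub>R v) - 2 * f x) / h) (at_right 0)"
  proof -
    have "\<exists>b'>0. \<forall>h>0. h < b' \<longrightarrow> \<kappa> \<le> (f (x + h *\<^sub>R v) + f (x - h *\<^sub>R v) - 2 * f x) / h"
      using b S by (intro exI[of _ b]) (auto simp: pos_le_divide_eq mult.commute)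
    then show ?thesis by (subst eventually_at_right[of 0 1]) auto
  qed
  then have "\<kappa> \<le> 0" by (rule tendsto_lowerbound[OF L]) simp
  then show False using k by simp
qed


definition Rm :: "real^2 \<Rightarrow> real^2" where "Rm y = rot (-(pi/2)) *v y"
lemma Rm_mk: "Rm y = mk (y$2) (-(y$1))"
  by (simp add: Rm_def rot_mv)

lemma AA_diff: "AA \<alpha> i *v y - AA \<alpha> i *v y' = (1/100::real) *\<^sub>R (rot (th \<alpha> i) *v (y - y'))"
  by (simp add: AA_mv rot_diff scaleR_diff_right)
lemma AA_add: "AA \<alpha> i *v y + AA \<alpha> i *v y' = (1/100::real) *\<^sub>R (rot (th \<alpha> i) *v (y + y'))"
  by (simp add: AA_mv rot_add scaleR_add_right)

lemma JJ_A: "JJ \<alpha> (AA \<alpha> i *v y) = qq * JJ \<alpha> (rot (th \<alpha> i) *v y)"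
  by (simp add: AA_mv JJ_scale qq_def power2_eq_square)

definition NN :: "real \<Rightarrow> real^2 \<Rightarrow> real" where
  "NN \<alpha> y = max (JJ \<alpha> (AA \<alpha> 1 *v y)) (JJ \<alpha> (AA \<alpha> 2 *v y))"

lemma JJA_lip: "JJ \<alpha> (AA \<alpha> i *v y) - JJ \<alpha> (AA \<alpha> i *v y') \<le> KK * qq * (norm (y - y') * norm (y + y'))"
proof -
  have "JJ \<alpha> (AA \<alpha> i *v y) - JJ \<alpha> (AA \<alpha> i *v y') \<le>
        KK * (norm (AA \<alpha> i *v y - AA \<alpha> i *v y') * norm (AA \<alpha> i *v y + AA \<alpha> i *v y'))"
    by (rule JJ_lip1)
  also have "\<dots> = KK * qq * (norm (y - y') * norm (y + y'))"
    by (simp add: AA_diff AA_add qq_def)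
  finally show ?thesis .
qed

lemma max_diff_le: "a - a' \<le> M \<Longrightarrow> b - b' \<le> M \<Longrightarrow> max a b - max a' (b'::real) \<le> M"
  by (simp add: max_def)

lemma NN_lip: "NN \<alpha> y - NN \<alpha> y' \<le> KK * qq * (norm (y - y') * norm (y + y'))"
  unfolding NN_def by (rule max_diff_le; rule JJA_lip)

definition GG :: "real \<Rightarrow> real^2 \<Rightarrow> real" where "GG \<alpha> y = JJ \<alpha> y - JJ \<alpha> (Rm y)"
definition EE :: "real \<Rightarrow> real^2 \<Rightarrow> real" where "EE \<alpha> y = NN \<alpha> y - NN \<alpha> (Rm y)"

lemma bellmanN: "JJ \<alpha> y = c0 y + NN \<alpha> y"
  unfolding NN_def by (rule bellman)

lemma GG_decomp: "GG \<alpha> y = ((y$2)^2 - (y$1)^2) + EE \<alpha> y"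
  unfolding GG_def EE_def
  using bellmanN[of \<alpha> y] bellmanN[of \<alpha> "Rm y"] by (simp add: c0_def Rm_mk)

lemma Rm_norm[simp]: "norm (Rm y) = norm y" by (simp add: Rm_def)
lemma Rm_diff: "Rm y - Rm y' = Rm (y - y')" by (simp add: Rm_def rot_diff)
lemma Rm_add: "Rm y + Rm y' = Rm (y + y')" by (simp add: Rm_def rot_add)

lemma EE_lip1: "EE \<alpha> y - EE \<alpha> y' \<le> 2 * KK * qq * (norm (y - y') * norm (y + y'))"
proof -
  have "NN \<alpha> y - NN \<alpha> y' \<le> KK * qq * (norm (y - y') * norm (y + y'))" by (rule NN_lip)
  moreover have "NN \<alpha> (Rm y') - NN \<alpha> (Rm y) \<le> KK * qq * (norm (y - y') * norm (y + y'))"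
    using NN_lip[of \<alpha> "Rm y'" "Rm y"] by (simp add: Rm_diff Rm_add norm_minus_commute add.commute)
  ultimately show ?thesis unfolding EE_def by linarith
qed

lemma EE_lip: "\<bar>EE \<alpha> y - EE \<alpha> y'\<bar> \<le> 2 * KK * qq * (norm (y - y') * norm (y + y'))"
  using EE_lip1[of \<alpha> y y'] EE_lip1[of \<alpha> y' y] by (simp add: norm_minus_commute add.commute)

lemma Rm_prod: "norm (y - Rm y) * norm (y + Rm y) = 2 * (norm y)^2"
proof -
  have a: "norm (y - Rm y) = sqrt (2 * (norm y)^2)"
    by (simp add: norm2 Rm_mk power2_eq_square algebra_simps)
  have b: "norm (y + Rm y) = sqrt (2 * (norm y)^2)"
    by (simp add: norm2 Rm_mk power2_eq_square algebra_simps)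
  show ?thesis unfolding a b by simp
qed

lemma EE_bound: "\<bar>EE \<alpha> y\<bar> \<le> 2 * KK * qq * (norm y)^2"
proof -
  have "NN \<alpha> y - NN \<alpha> (Rm y) \<le> KK * qq * (2 * (norm y)^2)"
    using NN_lip[of \<alpha> y "Rm y"] by (simp add: Rm_prod)
  moreover have "NN \<alpha> (Rm y) - NN \<alpha> y \<le> KK * qq * (2 * (norm y)^2)"
    using NN_lip[of \<alpha> "Rm y" y] Rm_prod[of y] by (simp add: norm_minus_commute add.commute)
  ultimately show ?thesis unfolding EE_def by (simp add: abs_le_iff)
qed


lemma KKqq: "KK * qq = 2/9999" by (simp add: KK_def qq_def)

lemma transv:
  fixes y :: "real^2"
  defines "w \<equiv> mk (-(y$1)) (y$2)"
  assumes s: "\<bar>s\<bar> \<le> 1/2"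
  shows "GG \<alpha> (y + s *\<^sub>R w) - GG \<alpha> y \<ge> 2 * s * (norm y)^2 - s^2 * (norm y)^2 - (1/500) * \<bar>s\<bar> * (norm y)^2"
    and "GG \<alpha> (y + s *\<^sub>R w) - GG \<alpha> y \<le> 2 * s * (norm y)^2 + s^2 * (norm y)^2 + (1/500) * \<bar>s\<bar> * (norm y)^2"
proof -
  define n where "n = norm y"
  have nw: "norm w = n" by (simp add: w_def n_def norm2)
  have n0: "0 \<le> n" by (simp add: n_def)
  have Y: "(y$1)^2 + (y$2)^2 = n^2" by (simp add: n_def norm2_sq)
  have P: "((y + s *\<^sub>R w)$2)^2 - ((y + s *\<^sub>R w)$1)^2 - ((y$2)^2 - (y$1)^2)
           = 2 * s * n^2 + s^2 * ((y$2)^2 - (y$1)^2)"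
  proof -
    have "((y + s *\<^sub>R w)$2)^2 - ((y + s *\<^sub>R w)$1)^2 - ((y$2)^2 - (y$1)^2)
           = 2 * s * ((y$1)^2 + (y$2)^2) + s^2 * ((y$2)^2 - (y$1)^2)"
      by (simp add: w_def power2_eq_square algebra_simps)
    then show ?thesis by (simp only: Y)
  qed
  have Pb: "\<bar>s^2 * ((y$2)^2 - (y$1)^2)\<bar> \<le> s^2 * n^2"
  proof -
    have "\<bar>(y$2)^2 - (y$1)^2\<bar> \<le> n^2"
      using Y zero_le_power2[of "y$1"] zero_le_power2[of "y$2"] unfolding abs_le_iff by linarith
    then show ?thesis by (simp add: abs_mult mult_left_mono)
  qed
  have E: "\<bar>EE \<alpha> (y + s *\<^sub>R w) - EE \<alpha> y\<bar> \<le> (4/9999) * (norm (s *\<^sub>R w) * norm (y + s *\<^sub>R w + y))"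
    using EE_lip[of \<alpha> "y + s *\<^sub>R w" y] KKqq by (simp add: mult.assoc)
  have n1: "norm (s *\<^sub>R w) = \<bar>s\<bar> * n" using nw by simp
  have n2: "norm (y + s *\<^sub>R w + y) \<le> 2 * n + \<bar>s\<bar> * n"
  proof -
    have "norm (y + s *\<^sub>R w + y) = norm (2 *\<^sub>R y + s *\<^sub>R w)" by (simp add: algebra_simps scaleR_2)
    also have "\<dots> \<le> norm (2 *\<^sub>R y) + norm (s *\<^sub>R w)" by (rule norm_triangle_ineq)
    finally show ?thesis using n1 nw by (simp add: n_def)
  qed
  have "norm (s *\<^sub>R w) * norm (y + s *\<^sub>R w + y) \<le> (\<bar>s\<bar> * n) * (2 * n + \<bar>s\<bar> * n)"
    unfolding n1 by (rule mult_left_mono[OF n2]) (simp add: n0)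
  also have "\<dots> \<le> (\<bar>s\<bar> * n) * (5/2 * n)"
  proof -
    have "\<bar>s\<bar> * n \<le> 1/2 * n" using s n0 by (rule mult_right_mono)
    then have "2 * n + \<bar>s\<bar> * n \<le> 5/2 * n" by simp
    then show ?thesis by (rule mult_left_mono) (simp add: n0)
  qed
  also have "\<dots> = 5/2 * (\<bar>s\<bar> * n^2)" by (simp add: power2_eq_square)
  finally have pr: "norm (s *\<^sub>R w) * norm (y + s *\<^sub>R w + y) \<le> 5/2 * (\<bar>s\<bar> * n^2)" .
  have X0: "0 \<le> \<bar>s\<bar> * n^2" by simp
  have "(4/9999) * (norm (s *\<^sub>R w) * norm (y + s *\<^sub>R w + y)) \<le> (4/9999) * (5/2 * (\<bar>s\<bar> * n^2))"
    by (rule mult_left_mono[OF pr]) simp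
  then have E2: "\<bar>EE \<alpha> (y + s *\<^sub>R w) - EE \<alpha> y\<bar> \<le> (1/500) * (\<bar>s\<bar> * n^2)"
    using E X0 by linarith
  have G: "GG \<alpha> (y + s *\<^sub>R w) - GG \<alpha> y = 2 * s * n^2 + s^2 * ((y$2)^2 - (y$1)^2) + (EE \<alpha> (y + s *\<^sub>R w) - EE \<alpha> y)"
    using P by (simp add: GG_decomp)
  have "GG \<alpha> (y + s *\<^sub>R w) - GG \<alpha> y \<ge> 2 * s * n^2 - s^2 * n^2 - (1/500) * (\<bar>s\<bar> * n^2)"
    using G Pb E2 unfolding abs_le_iff by linarith
  then show "GG \<alpha> (y + s *\<^sub>R w) - GG \<alpha> y \<ge> 2 * s * (norm y)^2 - s^2 * (norm y)^2 - (1/500) * \<bar>s\<bar> * (norm y)^2"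
    unfolding n_def by (simp add: mult.assoc)
  have "GG \<alpha> (y + s *\<^sub>R w) - GG \<alpha> y \<le> 2 * s * n^2 + s^2 * n^2 + (1/500) * (\<bar>s\<bar> * n^2)"
    using G Pb E2 unfolding abs_le_iff by linarith
  then show "GG \<alpha> (y + s *\<^sub>R w) - GG \<alpha> y \<le> 2 * s * (norm y)^2 + s^2 * (norm y)^2 + (1/500) * \<bar>s\<bar> * (norm y)^2"
    unfolding n_def by (simp add: mult.assoc)
qed


lemma th1: "th \<alpha> 1 = \<alpha>" by (simp add: th_def)
lemma th2: "th \<alpha> 2 = \<alpha> - pi/2" by (simp add: th_def)

lemma tie_nondiff:
  assumes x0: "x \<noteq> 0" and tie: "JJ \<alpha> (AA \<alpha> 1 *v x) = JJ \<alpha> (AA \<alpha> 2 *v x)"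
  shows "\<not> JJ \<alpha> differentiable (at x)"
proof -
  define y where "y = rot \<alpha> *v x"
  define w where "w = mk (-(y$1)) (y$2)"
  define v where "v = rot (-\<alpha>) *v w"
  have ny: "norm y = norm x" by (simp add: y_def)
  have rv: "rot \<alpha> *v v = w" by (simp add: v_def rot_comp)
  have A1: "AA \<alpha> 1 *v (x + s *\<^sub>R v) = (1/100::real) *\<^sub>R (y + s *\<^sub>R w)" for s
    by (simp add: AA_mv th_def rot_add rot_scale rv y_def)
  have A2: "AA \<alpha> 2 *v (x + s *\<^sub>R v) = (1/100::real) *\<^sub>R (Rm y + s *\<^sub>R Rm w)" for s
  proof -
    have "rot (\<alpha> - pi/2) *v z = Rm (rot \<alpha> *v z)" for z
      by (simp add: Rm_def rot_comp)
    then show ?thesis by (simp add: AA_mv th_def rot_add rot_scale rv y_def Rm_def)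
  qed
  define a where "a s = JJ \<alpha> (y + s *\<^sub>R w)" for s
  define b where "b s = JJ \<alpha> (Rm y + s *\<^sub>R Rm w)" for s
  have Rmlin: "Rm (y + s *\<^sub>R w) = Rm y + s *\<^sub>R Rm w" for s
    by (simp add: Rm_def rot_add rot_scale)
  have GGab: "GG \<alpha> (y + s *\<^sub>R w) = a s - b s" for s
    by (simp add: GG_def a_def b_def Rmlin)
  have Jx: "JJ \<alpha> (x + s *\<^sub>R v) = c0 (x + s *\<^sub>R v) + max (qq * a s) (qq * b s)" for s
    using bellman[of \<alpha> "x + s *\<^sub>R v", unfolded A1 A2] by (simp add: JJ_scale a_def b_def qq_def power2_eq_square)
  have ab0: "a 0 = b 0"
  proof -
    have A10: "AA \<alpha> 1 *v x = (1/100::real) *\<^sub>R y" using A1[of 0] by simp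
    have A20: "AA \<alpha> 2 *v x = (1/100::real) *\<^sub>R Rm y" using A2[of 0] by simp
    show ?thesis using tie[unfolded A10 A20] by (simp add: a_def b_def JJ_scale)
  qed
  have GG0: "GG \<alpha> y = 0" using GGab[of 0] ab0 by simp
  have ny0: "0 < (norm y)^2" using x0 ny by simp
  show ?thesis
  proof (rule nondiff_crit[of "qq * (norm y)^2" "1/2"])
    show "0 < qq * (norm y)^2" using ny0 qq_props by simp
    show "(0::real) < 1/2" by simp
    fix h :: real assume h: "0 < h" "h < 1/2"
    define Y where "Y = (norm y)^2"
    have T1: "GG \<alpha> (y + h *\<^sub>R w) - GG \<alpha> y \<ge> 2 * h * Y - h^2 * Y - (1/500) * \<bar>h\<bar> * Y"
      using transv(1)[where s=h and y=y and \<alpha>=\<alpha>] h unfolding Y_def w_def by simp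
    have T2: "GG \<alpha> (y + (-h) *\<^sub>R w) - GG \<alpha> y \<le> 2 * (-h) * Y + (-h)^2 * Y + (1/500) * \<bar>-h\<bar> * Y"
      using transv(2)[where s="-h" and y=y and \<alpha>=\<alpha>] h unfolding Y_def w_def by simp
    have Y0: "0 \<le> Y" by (simp add: Y_def)
    have hh: "h^2 * Y \<le> (1/2) * h * Y"
    proof -
      have "h^2 \<le> (1/2) * h" using h by (simp add: power2_eq_square mult_right_mono)
      then show ?thesis using Y0 by (rule mult_right_mono)
    qed
    have T1': "GG \<alpha> (y + h *\<^sub>R w) - GG \<alpha> y \<ge> 2 * (h * Y) - h^2 * Y - (1/500) * (h * Y)"
      using T1 h by (simp only: abs_of_pos mult.assoc)
    have T2': "GG \<alpha> (y + (-h) *\<^sub>R w) - GG \<alpha> y \<le> - (2 * (h * Y)) + h^2 * Y + (1/500) * (h * Y)"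
      using T2 h by (simp only: abs_minus_cancel abs_of_pos mult.assoc power2_minus mult_minus_left mult_minus_right)
    have hh': "h^2 * Y \<le> (1/2) * (h * Y)" using hh by (simp only: mult.assoc)
    have hY: "0 \<le> h * Y" using h Y0 by simp
    have F7: "a h - b h \<ge> h * Y" using T1' GGab[of h] GG0 hh' hY by linarith
    have F8: "a (-h) - b (-h) \<le> - (h * Y)" using T2' GGab[of "-h"] GG0 hh' hY by linarith
    have F5: "a h + a (-h) \<ge> 2 * a 0"
      using JJ_mid[of \<alpha> y "h *\<^sub>R w"] by (simp add: a_def)
    have F6: "b h + b (-h) \<ge> 2 * b 0"
      using JJ_mid[of \<alpha> "Rm y" "h *\<^sub>R Rm w"] by (simp add: b_def)
    have F9: "c0 (x + h *\<^sub>R v) + c0 (x + (-h) *\<^sub>R v) \<ge> 2 * c0 x"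
      using c0_par[of x "h *\<^sub>R v"] c0_nonneg[of "h *\<^sub>R v"] by simp
    have J1: "JJ \<alpha> (x + h *\<^sub>R v) = c0 (x + h *\<^sub>R v) + max (qq * a h) (qq * b h)" by (rule Jx)
    have J2: "JJ \<alpha> (x - h *\<^sub>R v) = c0 (x + (-h) *\<^sub>R v) + max (qq * a (-h)) (qq * b (-h))"
      using Jx[of "-h"] by simp
    have J3: "JJ \<alpha> x = c0 x + qq * a 0" using Jx[of 0] ab0 by simp
    have m1: "max (qq * a h) (qq * b h) \<ge> qq * a h" by simp
    have m2: "max (qq * a (-h)) (qq * b (-h)) \<ge> qq * b (-h)" by simp
    show "qq * (norm y)^2 * h \<le> JJ \<alpha> (x + h *\<^sub>R v) + JJ \<alpha> (x - h *\<^sub>R v) - 2 * JJ \<alpha> x"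
    proof -
      have fin: "1/10000 * (h * Y) \<le> JJ \<alpha> (x + h *\<^sub>R v) + JJ \<alpha> (x - h *\<^sub>R v) - 2 * JJ \<alpha> x"
        using J1 J2 J3 m1 m2 F5 F6 F7 F8 F9 ab0 unfolding qq_def by linarith
      have "qq * (norm y)^2 * h = 1/10000 * (h * Y)" by (simp add: qq_def Y_def)
      then show ?thesis using fin by linarith
    qed
  qed
qed


lemma c0_differentiable: "c0 differentiable (at x)"
proof -
  have l1: "(\<lambda>y::real^2. y $ 1) differentiable (at x)"
    by (rule bounded_linear_imp_differentiable[OF bounded_linear_vec_nth])
  have l2: "(\<lambda>y::real^2. y $ 2) differentiable (at x)"
    by (rule bounded_linear_imp_differentiable[OF bounded_linear_vec_nth])
  show ?thesis unfolding c0_def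
    using l1 l2 by (intro derivative_intros) auto
qed

lemma JJ_diff_scale:
  assumes d: "JJ \<alpha> differentiable (at x)" and s: "s \<noteq> 0"
  shows "JJ \<alpha> differentiable (at (s *\<^sub>R x))"
proof -
  have eq: "JJ \<alpha> = (\<lambda>z. s^2 * (JJ \<alpha> \<circ> (\<lambda>z. (1/s) *\<^sub>R z)) z)"
  proof
    fix z
    have "JJ \<alpha> z = JJ \<alpha> (s *\<^sub>R ((1/s) *\<^sub>R z))" using s by simp
    then show "JJ \<alpha> z = s^2 * (JJ \<alpha> \<circ> (\<lambda>z. (1/s) *\<^sub>R z)) z" by (simp only: JJ_scale comp_def)
  qed
  have l: "(\<lambda>z::real^2. (1/s) *\<^sub>R z) differentiable (at (s *\<^sub>R x))"
    by (rule bounded_linear_imp_differentiable[OF bounded_linear_scaleR_right])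
  have d': "JJ \<alpha> differentiable (at ((\<lambda>z. (1/s) *\<^sub>R z) (s *\<^sub>R x)))" using d s by simp
  have "(JJ \<alpha> \<circ> (\<lambda>z. (1/s) *\<^sub>R z)) differentiable (at (s *\<^sub>R x))"
    by (rule differentiable_chain_at[OF l d'])
  then have g: "(\<lambda>z. JJ \<alpha> ((1/s) *\<^sub>R z)) differentiable (at (s *\<^sub>R x))"
    by (simp add: comp_def)
  have "(\<lambda>z. s^2 * JJ \<alpha> ((1/s) *\<^sub>R z)) differentiable (at (s *\<^sub>R x))"
    by (rule differentiable_mult[OF differentiable_const g])
  then have "(\<lambda>z. s^2 * (JJ \<alpha> \<circ> (\<lambda>z. (1/s) *\<^sub>R z)) z) differentiable (at (s *\<^sub>R x))"
    by (simp add: comp_def)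
  then show ?thesis by (subst eq)
qed

lemma transfer:
  fixes M Mi :: "real^2 \<Rightarrow> real^2"
  assumes U: "open U" "x \<in> U" and eqU: "\<And>u. u \<in> U \<Longrightarrow> JJ \<alpha> u = c0 u + JJ \<alpha> (M u)"
    and lin: "linear M" "linear Mi" and inv: "\<And>z. M (Mi z) = z" "\<And>u. Mi (M u) = u"
    and d: "JJ \<alpha> differentiable (at x)"
  shows "JJ \<alpha> differentiable (at (M x))"
proof -
  define H where "H u = JJ \<alpha> u - c0 u" for u
  have dH: "H differentiable (at x)" unfolding H_def
    using d c0_differentiable by (intro derivative_intros) auto
  have dMi: "Mi differentiable (at (M x))" by (rule linear_imp_differentiable[OF lin(2)])
  have dH': "H differentiable (at (Mi (M x)))" using dH inv by simp
  have "(H \<circ> Mi) differentiable (at (M x))" by (rule differentiable_chain_at[OF dMi dH'])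
  then obtain D where D: "((H \<circ> Mi) has_derivative D) (at (M x))" unfolding differentiable_def by blast
  have V: "open (Mi -` U)"
    by (rule continuous_open_vimage[OF U(1)]) (rule linear_continuous_at[OF lin(2)[unfolded linear_conv_bounded_linear]])
  have MV: "M x \<in> Mi -` U" using U inv by simp
  have "(JJ \<alpha> has_derivative D) (at (M x))"
  proof (rule has_derivative_transform_within_open[OF D V MV])
    fix z assume "z \<in> Mi -` U"
    then have "Mi z \<in> U" by simp
    then show "(H \<circ> Mi) z = JJ \<alpha> z" using eqU[of "Mi z"] inv by (simp add: H_def)
  qed
  then show ?thesis unfolding differentiable_def by blast
qed

lemma AA_cont: "isCont (\<lambda>u. JJ \<alpha> (AA \<alpha> i *v u)) x"
  by (rule isCont_o2[OF matrix_vector_mult_linear_continuous_at JJ_isCont])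

lemma lin_rs: "linear (\<lambda>z::real^2. c *\<^sub>R (rot a *v z))"
  by (rule linearI) (simp_all add: rot_add rot_scale scaleR_add_right)

lemma prop_step1:
  assumes nd: "\<not> JJ \<alpha> differentiable (at y)" and g: "GG \<alpha> y > 0"
  shows "\<not> JJ \<alpha> differentiable (at ((100::real) *\<^sub>R (rot (-\<alpha>) *v y)))"
proof
  define x where "x = (100::real) *\<^sub>R (rot (-\<alpha>) *v y)"
  assume d: "JJ \<alpha> differentiable (at ((100::real) *\<^sub>R (rot (-\<alpha>) *v y)))"
  define U where "U = {u. JJ \<alpha> (AA \<alpha> 2 *v u) < JJ \<alpha> (AA \<alpha> 1 *v u)}"
  have oU: "open U" unfolding U_def
    by (rule open_Collect_less) (simp_all add: AA_cont continuous_at_imp_continuous_on)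
  have M1: "AA \<alpha> 1 *v x = y" by (simp add: x_def AA_mv th_def rot_scale rot_comp)
  have M2: "AA \<alpha> 2 *v x = Rm y"
    by (simp add: x_def AA_mv th_def rot_scale rot_comp Rm_def)
  have xU: "x \<in> U" unfolding U_def mem_Collect_eq M1 M2 using g by (simp add: GG_def)
  have "JJ \<alpha> differentiable (at ((\<lambda>u. AA \<alpha> 1 *v u) x))"
  proof (rule transfer[where Mi = "\<lambda>z. (100::real) *\<^sub>R (rot (-\<alpha>) *v z)", OF oU xU])
    fix u assume "u \<in> U"
    then show "JJ \<alpha> u = c0 u + JJ \<alpha> (AA \<alpha> 1 *v u)" using bellman[of \<alpha> u] by (simp add: U_def)
  next
    show "linear (\<lambda>u. AA \<alpha> 1 *v u)" by simp
    show "linear (\<lambda>z. (100::real) *\<^sub>R (rot (-\<alpha>) *v z))" by (rule lin_rs)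
    show "AA \<alpha> 1 *v ((100::real) *\<^sub>R (rot (-\<alpha>) *v z)) = z" for z
      by (simp add: AA_mv th_def rot_scale rot_comp)
    show "(100::real) *\<^sub>R (rot (-\<alpha>) *v (AA \<alpha> 1 *v u)) = u" for u
      by (simp add: AA_mv th_def rot_scale rot_comp)
    show "JJ \<alpha> differentiable (at x)" using d by (simp add: x_def)
  qed
  then show False using nd M1 by simp
qed

lemma Rp_Rm: "rot (pi/2) *v y = - Rm y"
  by (simp add: rot_mv Rm_mk vec2_eq)

lemma prop_step2:
  assumes nd: "\<not> JJ \<alpha> differentiable (at y)" and g: "GG \<alpha> y > 0"
  shows "\<not> JJ \<alpha> differentiable (at ((100::real) *\<^sub>R (rot (pi/2 - \<alpha>) *v y)))"
proof
  define x where "x = (100::real) *\<^sub>R (rot (pi/2 - \<alpha>) *v y)"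
  assume d: "JJ \<alpha> differentiable (at ((100::real) *\<^sub>R (rot (pi/2 - \<alpha>) *v y)))"
  define U where "U = {u. JJ \<alpha> (AA \<alpha> 1 *v u) < JJ \<alpha> (AA \<alpha> 2 *v u)}"
  have oU: "open U" unfolding U_def
    by (rule open_Collect_less) (simp_all add: AA_cont continuous_at_imp_continuous_on)
  have M2: "AA \<alpha> 2 *v x = y" by (simp add: x_def AA_mv th_def rot_scale rot_comp)
  have M1: "AA \<alpha> 1 *v x = - Rm y"
  proof -
    have "AA \<alpha> 1 *v x = rot (pi/2) *v y" by (simp add: x_def AA_mv th_def rot_scale rot_comp)
    then show ?thesis by (simp add: Rp_Rm)
  qed
  have xU: "x \<in> U" unfolding U_def mem_Collect_eq M1 M2 using g by (simp add: GG_def JJ_neg)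
  have "JJ \<alpha> differentiable (at ((\<lambda>u. AA \<alpha> 2 *v u) x))"
  proof (rule transfer[where Mi = "\<lambda>z. (100::real) *\<^sub>R (rot (pi/2 - \<alpha>) *v z)", OF oU xU])
    fix u assume "u \<in> U"
    then show "JJ \<alpha> u = c0 u + JJ \<alpha> (AA \<alpha> 2 *v u)" using bellman[of \<alpha> u] by (simp add: U_def)
  next
    show "linear (\<lambda>u. AA \<alpha> 2 *v u)" by simp
    show "linear (\<lambda>z. (100::real) *\<^sub>R (rot (pi/2 - \<alpha>) *v z))" by (rule lin_rs)
    show "AA \<alpha> 2 *v ((100::real) *\<^sub>R (rot (pi/2 - \<alpha>) *v z)) = z" for z
      by (simp add: AA_mv th_def rot_scale rot_comp)
    show "(100::real) *\<^sub>R (rot (pi/2 - \<alpha>) *v (AA \<alpha> 2 *v u)) = u" for u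
      by (simp add: AA_mv th_def rot_scale rot_comp)
    show "JJ \<alpha> differentiable (at x)" using d by (simp add: x_def)
  qed
  then show False using nd M2 by simp
qed


lemma cos_lb: "1 - u^2/2 \<le> cos (u::real)"
proof -
  have "cos u = 1 - 2 * sin (u/2) ^ 2" using cos_double_sin[of "u/2"] by simp
  moreover have "sin (u/2) ^ 2 \<le> (u/2)^2"
    using abs_sin_x_le_abs_x[of "u/2"] by (metis abs_ge_zero power2_abs power_mono)
  ultimately show ?thesis by (simp add: power_divide)
qed

lemma sin_lb: assumes "0 \<le> (x::real)" "x \<le> 1" shows "x/2 \<le> sin x"
proof -
  have "(\<lambda>u. sin u - u/2) 0 \<le> (\<lambda>u. sin u - u/2) x"
  proof (rule DERIV_nonneg_imp_nondecreasing[OF assms(1)])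
    fix u assume u: "0 \<le> u" "u \<le> x"
    have "u^2 \<le> 1" using u assms by (simp add: power_le_one)
    then have "cos u - 1/2 \<ge> 0" using cos_lb[of u] by simp
    moreover have "DERIV (\<lambda>u. sin u - u/2) u :> cos u - 1/2"
      by (auto intro!: derivative_eq_intros)
    ultimately show "\<exists>y. DERIV (\<lambda>u. sin u - u/2) u :> y \<and> y \<ge> 0" by blast
  qed
  then show ?thesis by simp
qed

lemma abs_sin_lb: assumes "\<bar>x::real\<bar> \<le> 1" shows "\<bar>x\<bar>/2 \<le> \<bar>sin x\<bar>"
proof (cases "0 \<le> x")
  case True
  then show ?thesis using sin_lb[of x] assms by simp
next
  case False
  then show ?thesis using sin_lb[of "-x"] assms by simp
qed

lemma abs_sin_big: assumes "1 \<le> \<bar>x::real\<bar>" "\<bar>x\<bar> \<le> pi/2" shows "1/2 \<le> \<bar>sin x\<bar>"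
proof -
  have "sin 1 \<le> sin \<bar>x\<bar>"
    using assms by (intro sin_monotone_2pi_le) auto
  moreover have "1/2 \<le> sin (1::real)" using sin_lb[of 1] by simp
  moreover have "sin \<bar>x\<bar> = \<bar>sin x\<bar>"
  proof (cases "0 \<le> x")
    case True
    then have "0 \<le> sin x" using assms pi_ge_two by (intro sin_ge_zero) auto
    then show ?thesis using True by simp
  next
    case False
    then have "0 \<le> sin (-x)" using assms pi_ge_two by (intro sin_ge_zero) auto
    then show ?thesis using False by simp
  qed
  ultimately show ?thesis by simp
qed

definition ee :: "real \<Rightarrow> real^2" where "ee t = mk (cos t) (sin t)"

lemma rot_ee: "rot a *v ee t = ee (t + a)"
  by (simp add: ee_def rot_mv vec2_eq cos_add sin_add algebra_simps)
lemma Rm_ee: "Rm (ee t) = ee (t - pi/2)"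
  by (simp add: ee_def Rm_mk vec2_eq cos_diff sin_diff)
lemma ee_pi: "ee (t + pi) = - ee t"
  by (simp add: ee_def vec2_eq)
lemma norm_ee: "norm (ee t) = 1"
  by (simp add: ee_def norm2)
lemma ee_nz: "ee t \<noteq> 0"
  using norm_ee[of t] by auto
lemma mk_axis: "mk a b = a *\<^sub>R axis 1 1 + b *\<^sub>R axis 2 1"
  by (simp add: vec2_eq axis_def)
lemma ee_cont: "isCont ee t"
  unfolding ee_def mk_axis by (intro continuous_intros)

definition gg :: "real \<Rightarrow> real \<Rightarrow> real" where "gg \<alpha> t = GG \<alpha> (ee t)"

lemma gg_shift: "gg \<alpha> (t + pi/2) = - gg \<alpha> t"
proof -
  have "ee (t - pi/2) = - ee (t + pi/2)"
    by (simp add: ee_def vec2_eq cos_diff sin_diff cos_add sin_add)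
  then show ?thesis by (simp add: gg_def GG_def Rm_ee JJ_neg)
qed

lemma gg_form: "gg \<alpha> t = - cos (2*t) + EE \<alpha> (ee t)"
  by (simp add: gg_def GG_decomp ee_def cos_double)

lemma EE_ee_bound: "\<bar>EE \<alpha> (ee t)\<bar> \<le> 4/9999"
  using EE_bound[of \<alpha> "ee t"] KKqq by (simp add: norm_ee)

lemma ee_dist: "norm (ee a - ee b) \<le> \<bar>a - b\<bar>"
proof -
  have "(norm (ee a - ee b))^2 = (cos a - cos b)^2 + (sin a - sin b)^2" by (simp add: norm2_sq ee_def)
  also have "\<dots> = ((cos a)^2 + (sin a)^2) + ((cos b)^2 + (sin b)^2) - 2 * (cos a * cos b + sin a * sin b)"
    by algebra
  also have "\<dots> = 2 - 2 * cos (a - b)" by (simp add: cos_diff)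
  also have "\<dots> = 4 * (sin ((a - b)/2))^2"
  proof -
    have e: "2 * ((a - b)/2) = a - b" by simp
    have "cos (a - b) = 1 - 2 * (sin ((a - b)/2))^2" using cos_double_sin[of "(a-b)/2", unfolded e] .
    then show ?thesis by simp
  qed
  also have "\<dots> \<le> 4 * ((a - b)/2)^2"
  proof -
    have "(sin ((a-b)/2))^2 \<le> ((a-b)/2)^2"
      using abs_sin_x_le_abs_x[of "(a-b)/2"] by (metis abs_ge_zero power2_abs power_mono)
    then show ?thesis by simp
  qed
  also have "\<dots> = (a - b)^2" by (simp add: power2_eq_square field_simps)
  finally have "(norm (ee a - ee b))^2 \<le> \<bar>a - b\<bar>^2" by simp
  then show ?thesis by (rule power2_le_imp_le) simp
qed

lemma EE_ee_lip: "\<bar>EE \<alpha> (ee a) - EE \<alpha> (ee b)\<bar> \<le> 8/9999 * \<bar>a - b\<bar>"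
proof -
  have "\<bar>EE \<alpha> (ee a) - EE \<alpha> (ee b)\<bar> \<le> 4/9999 * (norm (ee a - ee b) * norm (ee a + ee b))"
    using EE_lip[of \<alpha> "ee a" "ee b"] KKqq by (simp add: mult.assoc)
  also have "\<dots> \<le> 4/9999 * (\<bar>a - b\<bar> * 2)"
  proof -
    have "norm (ee a + ee b) \<le> 2" using norm_triangle_ineq[of "ee a" "ee b"] by (simp add: norm_ee)
    then have "norm (ee a - ee b) * norm (ee a + ee b) \<le> \<bar>a - b\<bar> * 2"
      using ee_dist[of a b] by (intro mult_mono) auto
    then show ?thesis by simp
  qed
  finally show ?thesis by simp
qed

lemma gg_cont: "continuous_on S (gg \<alpha>)"
proof -
  have "isCont (gg \<alpha>) t" for t
  proof -
    have "isCont (\<lambda>t. JJ \<alpha> (ee t)) t" by (rule isCont_o2[OF ee_cont JJ_isCont])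
    moreover have "isCont (\<lambda>t. JJ \<alpha> (Rm (ee t))) t"
      unfolding Rm_def by (rule isCont_o2[OF isCont_o2[OF ee_cont matrix_vector_mult_linear_continuous_at] JJ_isCont])
    ultimately show ?thesis unfolding gg_def GG_def by (intro continuous_intros)
  qed
  then show ?thesis by (simp add: continuous_at_imp_continuous_on)
qed


lemma gg_nat_shift: "gg \<alpha> (t + real n * (pi/2)) = (-1)^n * gg \<alpha> t"
proof (induction n)
  case 0
  then show ?case by simp
next
  case (Suc n)
  have "t + real (Suc n) * (pi/2) = (t + real n * (pi/2)) + pi/2" by (simp add: algebra_simps)
  show ?case unfolding \<open>t + real (Suc n) * (pi/2) = (t + real n * (pi/2)) + pi/2\<close> gg_shift Suc.IH by simp
qed

lemma gg_int_zero: assumes "gg \<alpha> t = 0" shows "gg \<alpha> (t + of_int m * (pi/2)) = 0"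
proof (cases "0 \<le> m")
  case True
  then obtain n where "m = int n" by (metis nonneg_eq_int)
  then show ?thesis using gg_nat_shift[of \<alpha> t n] assms by simp
next
  case False
  define n where "n = nat (-m)"
  have n: "m = - int n" using False by (simp add: n_def)
  have "gg \<alpha> t = (-1)^n * gg \<alpha> (t + of_int m * (pi/2))"
    using gg_nat_shift[of \<alpha> "t + of_int m * (pi/2)" n] n by simp
  then show ?thesis using assms by simp
qed

lemma gg_zero_cos: assumes "gg \<alpha> t = 0" shows "\<bar>cos (2*t)\<bar> \<le> 4/9999"
  using assms gg_form[of \<alpha> t] EE_ee_bound[of \<alpha> t] by simp

lemma gg_unique:
  assumes ga: "gg \<alpha> a = 0" and gb: "gg \<alpha> b = 0"
  shows "\<exists>m::int. b = a + of_int m * (pi/2)"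
proof -
  define m where "m = round ((b - a) / (pi/2))"
  define a' where "a' = a + of_int m * (pi/2)"
  define r where "r = b - a'"
  have r1: "\<bar>r\<bar> \<le> pi/4"
  proof -
    have "\<bar>of_int m - (b - a) / (pi/2)\<bar> \<le> 1/2" unfolding m_def by (rule of_int_round_abs_le)
    then have "\<bar>of_int m - (b - a) / (pi/2)\<bar> * (pi/2) \<le> 1/2 * (pi/2)" by (rule mult_right_mono) simp
    moreover have "\<bar>of_int m - (b - a) / (pi/2)\<bar> * (pi/2) = \<bar>r\<bar>"
    proof -
      have "\<bar>of_int m - (b - a) / (pi/2)\<bar> * (pi/2) = \<bar>(of_int m - (b - a) / (pi/2)) * (pi/2)\<bar>"
        by (simp add: abs_mult)
      also have "(of_int m - (b - a) / (pi/2)) * (pi/2) = - r"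
        by (simp add: r_def a'_def field_simps)
      finally show ?thesis by simp
    qed
    ultimately show ?thesis by linarith
  qed
  have ga': "gg \<alpha> a' = 0" unfolding a'_def by (rule gg_int_zero[OF ga])
  have b_eq: "b = a' + r" by (simp add: r_def)
  define c where "c = cos (2*a')"
  define s where "s = sin (2*a')"
  define C where "C = cos (2*r)"
  define S where "S = sin (2*r)"
  define \<eta> :: real where "\<eta> = 4/9999"
  have hc: "\<bar>c\<bar> \<le> \<eta>" unfolding c_def \<eta>_def by (rule gg_zero_cos[OF ga'])
  have hcb: "\<bar>cos (2*b)\<bar> \<le> \<eta>" unfolding \<eta>_def by (rule gg_zero_cos[OF gb])
  have cb: "cos (2*b) = c * C - s * S"
    unfolding b_eq c_def C_def s_def S_def by (simp add: distrib_left cos_add)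
  have lip: "\<bar>cos (2*b) - c\<bar> \<le> 8/9999 * \<bar>r\<bar>"
  proof -
    have "\<bar>EE \<alpha> (ee b) - EE \<alpha> (ee a')\<bar> \<le> 8/9999 * \<bar>b - a'\<bar>" by (rule EE_ee_lip)
    moreover have "EE \<alpha> (ee b) = cos (2*b)" using gb gg_form[of \<alpha> b] by simp
    moreover have "EE \<alpha> (ee a') = c" using ga' gg_form[of \<alpha> a'] by (simp add: c_def)
    ultimately show ?thesis by (simp add: r_def)
  qed
  have sc: "s^2 + c^2 = 1" by (simp add: s_def c_def)
  have s_le1: "\<bar>s\<bar> \<le> 1" by (simp add: s_def)
  have C_le1: "\<bar>C\<bar> \<le> 1" by (simp add: C_def)
  have c2: "c^2 \<le> \<eta>^2" using hc by (metis abs_ge_zero power2_abs power_mono)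
  have s_big: "99/100 \<le> \<bar>s\<bar>"
  proof -
    have "\<bar>s\<bar> * \<bar>s\<bar> \<le> \<bar>s\<bar> * 1" using s_le1 by (intro mult_left_mono) auto
    moreover have "\<bar>s\<bar> * \<bar>s\<bar> = s^2" by (simp add: power2_eq_square)
    moreover have "\<eta>^2 \<le> 1/100" by (simp add: \<eta>_def power2_eq_square)
    ultimately show ?thesis using sc c2 by linarith
  qed
  have sS1: "\<bar>s\<bar> * \<bar>S\<bar> \<le> 2 * \<eta>"
  proof -
    have "\<bar>c * C\<bar> \<le> \<eta>" using hc C_le1 by (simp add: abs_mult mult_le_one) (metis abs_ge_zero mult_mono mult.right_neutral order_trans)
    then have "\<bar>s * S\<bar> \<le> 2 * \<eta>" using cb hcb unfolding abs_le_iff by linarith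
    then show ?thesis by (simp add: abs_mult)
  qed
  have S_small: "\<bar>S\<bar> < 1/2"
  proof -
    have "99/100 * \<bar>S\<bar> \<le> \<bar>s\<bar> * \<bar>S\<bar>" using s_big by (rule mult_right_mono) simp
    then show ?thesis using sS1 by (simp add: \<eta>_def)
  qed
  have r2: "\<bar>2*r\<bar> < 1"
  proof (rule ccontr)
    assume "\<not> \<bar>2*r\<bar> < 1"
    then have h1: "1 \<le> \<bar>2*r\<bar>" by simp
    have h2: "\<bar>2*r\<bar> \<le> pi/2" using r1 by simp
    have "1/2 \<le> \<bar>S\<bar>" unfolding S_def by (rule abs_sin_big[OF h1 h2])
    then show False using S_small by simp
  qed
  have S_lb: "\<bar>r\<bar> \<le> \<bar>S\<bar>" using abs_sin_lb[of "2*r"] r2 by (simp add: S_def)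
  have C1: "0 \<le> 1 - C" by (simp add: C_def)
  have C2: "1 - C \<le> \<bar>r\<bar>"
  proof -
    have e1: "1 - C = 2 * (sin r)^2" using cos_double_sin[of r] unfolding C_def by linarith
    have e2: "(sin r)^2 \<le> r^2"
      using abs_sin_x_le_abs_x[of r] by (metis abs_ge_zero power2_abs power_mono)
    have e3: "\<bar>r\<bar> * \<bar>r\<bar> \<le> 1/2 * \<bar>r\<bar>" using r2 by (intro mult_right_mono) auto
    have e4: "r^2 = \<bar>r\<bar> * \<bar>r\<bar>" by (simp add: power2_eq_square)
    show ?thesis using e1 e2 e3 e4 by linarith
  qed
  have decomp: "c - cos (2*b) = c * (1 - C) + s * S" using cb by (simp add: algebra_simps)
  have cC: "\<bar>c * (1 - C)\<bar> \<le> \<eta> * \<bar>r\<bar>"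
  proof -
    have "\<bar>1 - C\<bar> \<le> \<bar>r\<bar>" using C1 C2 by simp
    then have "\<bar>c\<bar> * \<bar>1 - C\<bar> \<le> \<eta> * \<bar>r\<bar>" using hc by (intro mult_mono) (auto simp: \<eta>_def)
    then show ?thesis by (simp add: abs_mult)
  qed
  have "\<bar>s * S\<bar> \<le> 8/9999 * \<bar>r\<bar> + \<eta> * \<bar>r\<bar>"
    using decomp lip cC unfolding abs_le_iff by linarith
  moreover have "99/100 * \<bar>r\<bar> \<le> \<bar>s * S\<bar>"
  proof -
    have "99/100 * \<bar>r\<bar> \<le> \<bar>s\<bar> * \<bar>S\<bar>" using s_big S_lb by (intro mult_mono) auto
    then show ?thesis by (simp add: abs_mult)
  qed
  ultimately have "\<bar>r\<bar> \<le> 0" by (simp add: \<eta>_def)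
  then have "r = 0" by simp
  then have "b = a + of_int m * (pi/2)" using b_eq by (simp add: a'_def)
  then show ?thesis by (rule exI)
qed

definition ND :: "real \<Rightarrow> real \<Rightarrow> bool" where
  "ND \<alpha> u \<longleftrightarrow> \<not> JJ \<alpha> differentiable (at (ee u))"

lemma ND_neg: "ND \<alpha> u \<Longrightarrow> ND \<alpha> (u + pi)"
  unfolding ND_def ee_pi using JJ_diff_scale[of \<alpha> "- ee u" "-1"] by auto

lemma ND_neg2: assumes "ND \<alpha> u" shows "ND \<alpha> (u - pi)"
proof -
  have e: "ee u = (-1::real) *\<^sub>R ee (u - pi)" using ee_pi[of "u - pi"] by simp
  show ?thesis unfolding ND_def
  proof
    assume "JJ \<alpha> differentiable (at (ee (u - pi)))"
    then have "JJ \<alpha> differentiable (at ((-1::real) *\<^sub>R ee (u - pi)))" by (rule JJ_diff_scale) simp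
    then show False using assms unfolding ND_def e by simp
  qed
qed

lemma ND_nat: "ND \<alpha> u \<Longrightarrow> ND \<alpha> (u + real n * pi) \<and> ND \<alpha> (u - real n * pi)"
proof (induction n)
  case 0
  then show ?case by simp
next
  case (Suc n)
  then have a: "ND \<alpha> (u + real n * pi)" and b: "ND \<alpha> (u - real n * pi)" by auto
  have e1: "u + real (Suc n) * pi = (u + real n * pi) + pi" by (simp add: algebra_simps)
  have e2: "u - real (Suc n) * pi = (u - real n * pi) - pi" by (simp add: algebra_simps)
  show ?case unfolding e1 e2 using ND_neg[OF a] ND_neg2[OF b] by blast
qed

lemma ND_int: "ND \<alpha> u \<Longrightarrow> ND \<alpha> (u + of_int m * pi)"
proof (cases "0 \<le> m")
  case True
  then have e: "real (nat m) = of_int m" by simp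
  show "ND \<alpha> u \<Longrightarrow> ND \<alpha> (u + of_int m * pi)" using ND_nat[of \<alpha> u "nat m"] unfolding e by blast
next
  case False
  then have e: "real (nat (-m)) * pi = - (of_int m * pi)" by simp
  show "ND \<alpha> u \<Longrightarrow> ND \<alpha> (u + of_int m * pi)" using ND_nat[of \<alpha> u "nat (-m)"] unfolding e by simp
qed

lemma gg_root: "\<exists>\<gamma>. gg \<alpha> \<gamma> = 0"
proof -
  have "gg \<alpha> 0 \<le> 0" using gg_form[of \<alpha> 0] EE_ee_bound[of \<alpha> 0] by simp
  moreover have "0 \<le> gg \<alpha> (pi/2)" using gg_form[of \<alpha> "pi/2"] EE_ee_bound[of \<alpha> "pi/2"] by simp
  ultimately show ?thesis using IVT'[of "gg \<alpha>" 0 0 "pi/2"] gg_cont by auto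
qed

lemma tie_ee:
  assumes "gg \<alpha> \<gamma> = 0"
  shows "ND \<alpha> (\<gamma> - \<alpha> + of_int j * (pi/2))"
proof -
  define t where "t = \<gamma> + of_int j * (pi/2)"
  have g0: "gg \<alpha> t = 0" unfolding t_def by (rule gg_int_zero[OF assms])
  define x where "x = ee (\<gamma> - \<alpha> + of_int j * (pi/2))"
  have A1: "AA \<alpha> 1 *v x = (1/100::real) *\<^sub>R ee t"
    by (simp add: x_def AA_mv th_def rot_ee t_def algebra_simps)
  have A2: "AA \<alpha> 2 *v x = (1/100::real) *\<^sub>R Rm (ee t)"
    by (simp add: x_def AA_mv th_def rot_ee t_def Rm_ee algebra_simps)
  have "JJ \<alpha> (AA \<alpha> 1 *v x) = JJ \<alpha> (AA \<alpha> 2 *v x)"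
    unfolding A1 A2 JJ_scale using g0 by (simp add: gg_def GG_def)
  then have "\<not> JJ \<alpha> differentiable (at x)" by (rule tie_nondiff[rotated]) (simp add: x_def ee_nz)
  then show ?thesis unfolding ND_def x_def .
qed


lemma irr_step:
  assumes irr: "\<alpha> / pi \<notin> \<rat>" and g: "gg \<alpha> \<gamma> = 0" and k: "1 \<le> k"
  shows "gg \<alpha> (\<gamma> - real k * \<alpha>) \<noteq> 0"
proof
  assume "gg \<alpha> (\<gamma> - real k * \<alpha>) = 0"
  then obtain m :: int where m: "\<gamma> - real k * \<alpha> = \<gamma> + of_int m * (pi/2)"
    using gg_unique[OF g] by blast
  then have "real k * \<alpha> = - (of_int m * (pi/2))" by linarith
  then have "\<alpha> / pi = - of_int m / (2 * real k)" using k by (simp add: field_simps)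
  moreover have "- of_int m / (2 * real k) \<in> \<rat>" by simp
  ultimately show False using irr by simp
qed

lemma ND_scale100: "\<not> JJ \<alpha> differentiable (at ((100::real) *\<^sub>R ee u)) \<Longrightarrow> ND \<alpha> u"
  unfolding ND_def using JJ_diff_scale[of \<alpha> "ee u" 100] by auto

lemma chain:
  assumes irr: "\<alpha> / pi \<notin> \<rat>" and g: "gg \<alpha> \<gamma> = 0"
  shows "ND \<alpha> (\<gamma> - real (Suc k) * \<alpha> + of_int j * (pi/2))"
proof (induction k arbitrary: j)
  case 0
  then show ?case using tie_ee[OF g, of j] by simp
next
  case (Suc k)
  define K where "K = Suc k"
  have IH: "ND \<alpha> (\<gamma> - real K * \<alpha> + of_int j' * (pi/2))" for j' using Suc K_def by simp
  have nz: "gg \<alpha> (\<gamma> - real K * \<alpha>) \<noteq> 0" by (rule irr_step[OF irr g]) (simp add: K_def)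
  obtain j0 :: int where j0: "j0 = 0 \<or> j0 = 1" and pos: "gg \<alpha> (\<gamma> - real K * \<alpha> + of_int j0 * (pi/2)) > 0"
  proof (cases "gg \<alpha> (\<gamma> - real K * \<alpha>) > 0")
    case True
    then show ?thesis using that[of 0] by simp
  next
    case False
    then have "gg \<alpha> (\<gamma> - real K * \<alpha> + pi/2) > 0" using nz gg_shift[of \<alpha> "\<gamma> - real K * \<alpha>"] by simp
    then show ?thesis using that[of 1] by simp
  qed
  define t where "t = \<gamma> - real K * \<alpha> + of_int j0 * (pi/2)"
  have ndt: "\<not> JJ \<alpha> differentiable (at (ee t))" using IH[of j0] by (simp add: ND_def t_def)
  have Gt: "GG \<alpha> (ee t) > 0" using pos by (simp add: gg_def t_def)
  have nd1: "ND \<alpha> (t - \<alpha>)"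
    using prop_step1[OF ndt Gt] by (intro ND_scale100) (simp add: rot_ee)
  have nd2: "ND \<alpha> (t + pi/2 - \<alpha>)"
    using prop_step2[OF ndt Gt] by (intro ND_scale100) (simp add: rot_ee algebra_simps)
  define d where "d = j - j0"
  define m where "m = d div 2"
  have dm: "d = 2 * m + d mod 2" by (simp add: m_def)
  have "d mod 2 = 0 \<or> d mod 2 = 1" by auto
  then show ?case
  proof
    assume "d mod 2 = 0"
    then have ji: "j = j0 + 2 * m" using dm unfolding d_def by linarith
    have jj: "of_int j = of_int j0 + 2 * (of_int m :: real)" unfolding ji by simp
    have "\<gamma> - real (Suc (Suc k)) * \<alpha> + of_int j * (pi/2) = (t - \<alpha>) + of_int m * pi"
      unfolding t_def K_def jj by (simp add: algebra_simps)
    then show ?case using ND_int[OF nd1, of m] by simp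
  next
    assume "d mod 2 = 1"
    then have ji: "j = j0 + 2 * m + 1" using dm unfolding d_def by linarith
    have jj: "of_int j = of_int j0 + 2 * (of_int m :: real) + 1" unfolding ji by simp
    have "\<gamma> - real (Suc (Suc k)) * \<alpha> + of_int j * (pi/2) = (t + pi/2 - \<alpha>) + of_int m * pi"
      unfolding t_def K_def jj by (simp add: algebra_simps)
    then show ?case using ND_int[OF nd2, of m] by simp
  qed
qed


lemma polar: assumes "x \<noteq> 0" shows "\<exists>\<theta>. x = norm x *\<^sub>R ee \<theta>"
proof -
  define n where "n = norm x"
  have n0: "0 < n" using assms by (simp add: n_def)
  have "(x$1 / n)^2 + (x$2 / n)^2 = ((x$1)^2 + (x$2)^2) / n^2"
    by (simp add: power_divide add_divide_distrib)
  also have "\<dots> = 1"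
  proof -
    have nn: "(x$1)^2 + (x$2)^2 = n^2" by (simp add: n_def norm2_sq)
    show ?thesis unfolding nn using n0 by simp
  qed
  finally have "(x$1 / n)^2 + (x$2 / n)^2 = 1" .
  then obtain \<theta> where "x$1 / n = cos \<theta>" "x$2 / n = sin \<theta>" by (rule sincos_total_2pi) blast
  then have "x = n *\<^sub>R ee \<theta>" using n0 by (simp add: vec2_eq ee_def field_simps)
  then show ?thesis unfolding n_def by blast
qed

lemma dense_angles:
  assumes irr: "\<alpha> / pi \<notin> \<rat>" and e: "0 < e"
  shows "\<exists>k j. \<bar>(\<gamma> - real (Suc k) * \<alpha> + of_int j * (pi/2)) - \<theta>\<bar> < e"
proof -
  define \<xi> where "\<xi> = - (2 * \<alpha> / pi)"
  have xi: "\<xi> \<notin> \<rat>"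
  proof
    assume "\<xi> \<in> \<rat>"
    then have "\<xi> / 2 \<in> \<rat>" by simp
    then have "- (\<xi> / 2) \<in> \<rat>" by (simp only: Rats_minus_iff)
    moreover have "- (\<xi> / 2) = \<alpha> / pi" by (simp add: \<xi>_def)
    ultimately show False using irr by simp
  qed
  have d: "0 < e * (2 / pi)" using e by simp
  obtain h k :: int where k: "k > 0" and hk: "\<bar>of_int k * \<xi> - of_int h - (\<theta> - \<gamma>) * (2/pi)\<bar> < e * (2/pi)"
    using sequence_of_fractional_parts_is_dense[OF xi d] by blast
  define k' where "k' = nat k - 1"
  have kk: "real (Suc k') = of_int k" using k by (simp add: k'_def)
  have "(\<gamma> - real (Suc k') * \<alpha> + of_int (-h) * (pi/2)) - \<theta>
        = (pi/2) * (of_int k * \<xi> - of_int h - (\<theta> - \<gamma>) * (2/pi))"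
    unfolding kk by (simp add: \<xi>_def field_simps)
  then have "\<bar>(\<gamma> - real (Suc k') * \<alpha> + of_int (-h) * (pi/2)) - \<theta>\<bar>
        = (pi/2) * \<bar>of_int k * \<xi> - of_int h - (\<theta> - \<gamma>) * (2/pi)\<bar>"
    by (simp only: abs_mult) simp
  also have "\<dots> < (pi/2) * (e * (2/pi))" by (rule mult_strict_left_mono[OF hk]) simp
  also have "\<dots> = e" by simp
  finally show ?thesis by blast
qed

lemma main_result:
  assumes irr: "\<alpha> / pi \<notin> \<rat>"
  shows "\<exists>S. closure S = (UNIV :: (real^2) set) \<and> (\<forall>x\<in>S. \<not> (JJ \<alpha>) differentiable (at x))"
proof -
  obtain \<gamma> where g: "gg \<alpha> \<gamma> = 0" using gg_root by blast
  define S where "S = {r *\<^sub>R ee (\<gamma> - real (Suc k) * \<alpha> + of_int j * (pi/2)) | r k j. r > (0::real)}"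
  have nd: "\<forall>x\<in>S. \<not> (JJ \<alpha>) differentiable (at x)"
  proof
    fix x assume "x \<in> S"
    then obtain r k j where x: "x = r *\<^sub>R ee (\<gamma> - real (Suc k) * \<alpha> + of_int j * (pi/2))" and r: "r > 0"
      unfolding S_def by blast
    have "ND \<alpha> (\<gamma> - real (Suc k) * \<alpha> + of_int j * (pi/2))" by (rule chain[OF irr g])
    then show "\<not> (JJ \<alpha>) differentiable (at x)"
      unfolding ND_def x using JJ_diff_scale[of \<alpha> _ "1/r"] r by fastforce
  qed
  have cl: "closure S = UNIV"
  proof (rule set_eqI, rule iffI)
    fix x :: "real^2" assume "x \<in> UNIV"
    show "x \<in> closure S" unfolding closure_approachable
    proof (intro allI impI)
      fix e :: real assume e: "0 < e"
      show "\<exists>y\<in>S. dist y x < e"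
      proof (cases "x = 0")
        case True
        define y where "y = (e/2) *\<^sub>R ee (\<gamma> - real (Suc 0) * \<alpha> + of_int 0 * (pi/2))"
        have "\<exists>r k j. y = r *\<^sub>R ee (\<gamma> - real (Suc k) * \<alpha> + of_int j * (pi/2)) \<and> r > (0::real)"
          by (rule exI[of _ "e/2"], rule exI[of _ 0], rule exI[of _ 0]) (simp add: y_def e)
        then have "y \<in> S" unfolding S_def by blast
        moreover have "dist y x < e" using e True by (simp add: y_def dist_norm norm_ee)
        ultimately show ?thesis by blast
      next
        case False
        obtain \<theta> where th: "x = norm x *\<^sub>R ee \<theta>" using polar[OF False] by blast
        have n0: "0 < norm x" using False by simp
        obtain k j where kj: "\<bar>(\<gamma> - real (Suc k) * \<alpha> + of_int j * (pi/2)) - \<theta>\<bar> < e / norm x"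
          using dense_angles[OF irr, of "e / norm x" \<gamma> \<theta>] e n0 by auto
        define t where "t = \<gamma> - real (Suc k) * \<alpha> + of_int j * (pi/2)"
        define y where "y = norm x *\<^sub>R ee t"
        have "\<exists>r k' j'. y = r *\<^sub>R ee (\<gamma> - real (Suc k') * \<alpha> + of_int j' * (pi/2)) \<and> r > (0::real)"
          by (rule exI[of _ "norm x"], rule exI[of _ k], rule exI[of _ j]) (simp add: y_def t_def False)
        then have "y \<in> S" unfolding S_def by blast
        moreover have "dist y x < e"
        proof -
          have "dist y x = norm x * norm (ee t - ee \<theta>)"
            by (subst th) (simp add: y_def dist_norm scaleR_diff_right[symmetric])
          also have "\<dots> \<le> norm x * \<bar>t - \<theta>\<bar>" using ee_dist[of t \<theta>] n0 by simp
          also have "\<dots> < norm x * (e / norm x)" unfolding t_def by (rule mult_strict_left_mono[OF kj n0])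
          also have "\<dots> = e" using n0 by simp
          finally show ?thesis .
        qed
        ultimately show ?thesis by blast
      qed
    qed
  qed simp
  show ?thesis using cl nd by blast
qed

theorem corollary4:
  fixes \<alpha> :: real
  assumes "pi / 8 < \<alpha>" and "\<alpha> < 3 * pi / 8"
    and "\<alpha> / pi \<notin> \<rat>"
  defines "A \<equiv> (\<lambda>i::nat. if i = 1 then (0.01::real) *\<^sub>R rot \<alpha> else (0.01::real) *\<^sub>R rot (\<alpha> - pi / 2))"
    and "c \<equiv> (\<lambda>x::real^2. (x $ 1)^2 + 2 * (x $ 2)^2)"
  shows "\<exists>S. closure S = (UNIV :: (real^2) set) \<and>
             (\<forall>x\<in>S. \<not> (worst_value A c) differentiable (at x))"
proof -
  have eA: "A = AA \<alpha>" unfolding A_def AA_def by simp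
  have ec: "c = c0" unfolding c_def c0_def by simp
  have "worst_value A c = JJ \<alpha>" unfolding eA ec by (simp add: fun_eq_iff JJ_def)
  then show ?thesis using main_result[OF assms(3)] by simp
qed

end
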